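(* Let $\alpha=(\alpha_1,\dots,\alpha_k)\in\mathbb N^k$ with $k\ge1$ and $\alpha_k>0$. Then for every $\beta\in\mathbb P^k$, $$Z\tbinom{\alpha}{\beta}=M_\alpha=\sum_{0<i_1<\cdots<i_k}x_{i_1}^{\alpha_1}\cdots x_{i_k}^{\alpha_k}.$$ In particular, $Z\binom{\alpha}{\beta}$ is independent of $\beta$.
   Context: $\mathbb P$ denotes the positive and $\mathbb N$ the nonnegative integers. Let $X=\{x_i:i\in\mathbb P\}$ be commuting indeterminates. GSym. $\mathrm{GSym}\subseteq\mathbb Q[[X]]$ is the $\mathbb Q$-span of the series $\widehat M_{\binom{\gamma}{\mu}}=\sum_{0<i_1<\cdots<i_m}i_1^{\mu_1}\cdots i_m^{\mu_m}x_{i_1}^{\gamma_1}\cdots x_{i_m}^{\gamma_m}$, for $\gamma\in\mathbb N^m$ with $m=0$ or $\gamma_m>0$, and $\mu\in\mathbb N^m$. Regularization. For $\alpha\in\mathbb N^k$ and $\beta\in\mathbb P^k$, $\phi\binom{\alpha}{\beta}\in\mathrm{GSym}[t][z^{-1},z]]$ is obtained from $$\sum_{0<i_1<\cdots<i_k}x_{i_1}^{\alpha_1}\cdots x_{i_k}^{\alpha_k}e^{(i_1+t)\beta_1z}\cdots e^{(i_k+t)\beta_kz}$$ as follows. The coefficient of each $X$-monomial converges absolutely for $t\ge0$, $\mathrm{Re}(z)<0$. It is expanded as a Laurent series in $z$ with coefficients in $\mathbb Q[t]$, and powers of $z,t$ are collected. Renormalization. Let $P$ be the projection onto the polar part in $z$,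 $P(\sum_{n\ge m}a_nz^n)=\sum_{n<0}a_nz^n$. For $k\ge1$ define recursively $$\phi_-\tbinom{\alpha}{\beta}=-P\Big(\phi\tbinom{\alpha}{\beta}+\sum_{i=1}^{k-1}\phi\tbinom{\alpha_1..\alpha_i}{\beta_1..\beta_i}\phi_-\tbinom{\alpha_{i+1}..\alpha_k}{\beta_{i+1}..\beta_k}\Big),$$ $$\phi_+\tbinom{\alpha}{\beta}=(\mathrm{id}-P)\Big(\phi\tbinom{\alpha}{\beta}+\sum_{i=1}^{k-1}\phi\tbinom{\alpha_1..\alpha_i}{\beta_1..\beta_i}\phi_-\tbinom{\alpha_{i+1}..\alpha_k}{\beta_{i+1}..\beta_k}\Big).$$ Then $Z\binom{\alpha}{\beta}:=\phi_+\binom{\alpha}{\beta}\big|_{z=0}\in\mathrm{GSym}[t]$. *)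

theory Defs
  imports "HOL-Analysis.Analysis" "HOL-Computational_Algebra.Formal_Laurent_Series"
          "HOL-Computational_Algebra.Polynomial" "HOL-Library.Poly_Mapping"
begin

text \<open>X-monomials: finitely supported exponent vectors;
  we use the natural number i itself as the index of x_i; only i > 0 occur).\<close>
type_synonym xmon = "nat \<Rightarrow>\<^sub>0 nat"

text \<open>Elements of Q[t]((z))[[X]], coefficientwise: each X-monomial gets a Laurent series
  in z with coefficients in Q[t].\<close>
type_synonym lser = "xmon \<Rightarrow> rat poly fls"

definition tuples :: "nat \<Rightarrow> nat list set" where
  "tuples k = {i. length i = k \<and> sorted_wrt (<) i \<and> (\<forall>j\<in>set i. 0 < j)}"

definition xmono :: "nat list \<Rightarrow> nat list \<Rightarrow> xmon" where
  "xmono i a = (\<Sum>j<length i. Poly_Mapping.single (i ! j) (a ! j))"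

definition lmult :: "lser \<Rightarrow> lser \<Rightarrow> lser" where
  "lmult F G = (\<lambda>m. \<Sum>(a, b) \<in> {(a, b). a + b = m}. F a * G b)"

definition eval_coeff :: "rat poly \<Rightarrow> real \<Rightarrow> complex" where
  "eval_coeff p t = poly (map_poly of_rat p) (complex_of_real t)"

definition fls_converges_to :: "rat poly fls \<Rightarrow> real \<Rightarrow> complex \<Rightarrow> complex \<Rightarrow> bool" where
  "fls_converges_to F t z w \<longleftrightarrow>
     (\<lambda>n::nat. eval_coeff (fls_nth F (int n + fls_subdegree F)) t * z powi (int n + fls_subdegree F))
       sums w"

definition phi_fun :: "nat list \<Rightarrow> nat list \<Rightarrow> xmon \<Rightarrow> real \<Rightarrow> complex \<Rightarrow> complex" where
  "phi_fun a b m t z =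
     infsum (\<lambda>i. exp (\<Sum>j<length i. (of_nat (i ! j) + complex_of_real t) * of_nat (b ! j) * z))
            {i \<in> tuples (length a). xmono i a = m}"

definition phi :: "nat list \<Rightarrow> nat list \<Rightarrow> lser" where
  "phi a b = (\<lambda>m. THE F. \<forall>t\<ge>0. \<exists>r>0. \<forall>z. 0 < cmod z \<and> cmod z < r \<and> Re z < 0 \<longrightarrow>
                  fls_converges_to F t z (phi_fun a b m t z))"

definition polar :: "rat poly fls \<Rightarrow> rat poly fls" where
  "polar F = F - fps_to_fls (fls_regpart F)"

definition regular :: "rat poly fls \<Rightarrow> rat poly fls" where
  "regular F = fps_to_fls (fls_regpart F)"

function phi_minus :: "nat list \<Rightarrow> nat list \<Rightarrow> lser" where
  "phi_minus a b = (\<lambda>m. - polar (phi a b m +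
      (\<Sum>i\<in>{1..<length a}. lmult (phi (take i a) (take i b)) (phi_minus (drop i a) (drop i b)) m)))"
  by pat_completeness auto
termination
  by (relation "Wellfounded.measure (\<lambda>(a, b). length a)") auto

definition phi_plus :: "nat list \<Rightarrow> nat list \<Rightarrow> lser" where
  "phi_plus a b = (\<lambda>m. regular (phi a b m +
      (\<Sum>i\<in>{1..<length a}. lmult (phi (take i a) (take i b)) (phi_minus (drop i a) (drop i b)) m)))"

definition Zren :: "nat list \<Rightarrow> nat list \<Rightarrow> xmon \<Rightarrow> rat poly" where
  "Zren a b = (\<lambda>m. fls_nth (phi_plus a b m) 0)"

definition Mqsym :: "nat list \<Rightarrow> xmon \<Rightarrow> rat poly" where
  "Mqsym a = (\<lambda>m. of_nat (card {i \<in> tuples (length a). xmono i a = m}))"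

end

theory Submission
  imports Defs "HOL-Complex_Analysis.Complex_Analysis"
begin

declare phi_minus.simps[simp del]

lemma mp_add: "map_poly (of_rat::rat\<Rightarrow>complex) (p+q) = map_poly of_rat p + map_poly of_rat q"
  by (intro poly_eqI) (simp add: coeff_map_poly of_rat_add)

lemma mp_mult: "map_poly (of_rat::rat\<Rightarrow>complex) (p*q) = map_poly of_rat p * map_poly of_rat q"
  by (intro poly_eqI) (simp add: coeff_map_poly coeff_mult of_rat_sum of_rat_mult)

lemma ev_diff: "eval_coeff (p-q) t = eval_coeff p t - eval_coeff q t"
proof -
  have "map_poly (of_rat::rat\<Rightarrow>complex) (p-q) = map_poly of_rat p - map_poly of_rat q"
    by (intro poly_eqI) (simp add: coeff_map_poly of_rat_diff)
  then show ?thesis by (simp add: eval_coeff_def)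
qed

lemma ev_add: "eval_coeff (p+q) t = eval_coeff p t + eval_coeff q t"
  by (simp add: eval_coeff_def mp_add)

lemma ev_mult: "eval_coeff (p*q) t = eval_coeff p t * eval_coeff q t"
  by (simp add: eval_coeff_def mp_mult)

lemma ev_one: "eval_coeff 1 t = 1"
  by (simp add: eval_coeff_def)

lemma ev_zero: "eval_coeff 0 t = 0"
  by (simp add: eval_coeff_def)

lemma ev_power: "eval_coeff (p^n) t = eval_coeff p t ^ n"
  by (induction n) (simp_all add: ev_mult ev_one)

lemma ev_smult: "eval_coeff (smult c p) t = of_rat c * eval_coeff p t"
  by (simp add: eval_coeff_def map_poly_smult of_rat_mult)

lemma ev_sum: "eval_coeff (sum f A) t = (\<Sum>x\<in>A. eval_coeff (f x) t)"
  by (induction A rule: infinite_finite_induct) (simp_all add: ev_add ev_zero)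

lemma ev_lin: "eval_coeff [:c, d:] t = of_rat c + of_rat d * complex_of_real t"
  by (simp add: eval_coeff_def map_poly_pCons)

lemma conv_shift:
  assumes "D \<le> fls_subdegree F"
  shows "fls_converges_to F t z w \<longleftrightarrow>
    (\<lambda>n. eval_coeff (fls_nth F (int n + D)) t * z powi (int n + D)) sums w"
proof -
  define k where "k = nat (fls_subdegree F - D)"
  define f where "f = (\<lambda>n::nat. eval_coeff (fls_nth F (int n + D)) t * z powi (int n + D))"
  have z: "f i = 0" if "i < k" for i
  proof -
    have "int i + D < fls_subdegree F" using that assms unfolding k_def by linarith
    then have "fls_nth F (int i + D) = 0" by (simp add: fls_eq0_below_subdegree)
    then show ?thesis by (simp add: f_def ev_zero)
  qed
  have e: "(\<lambda>i. f (i + k)) = (\<lambda>n. eval_coeff (fls_nth F (int n + fls_subdegree F)) t * z powi (int n + fls_subdegree F))"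
    using assms by (auto simp: f_def k_def algebra_simps)
  show ?thesis
    unfolding fls_converges_to_def
    using sums_zero_iff_shift[of k f w, OF z] e by (simp add: f_def)
qed

lemma powser_zero_neg:
  fixes a :: "nat \<Rightarrow> complex"
  assumes r: "r > 0"
    and sm: "\<And>s. 0 < s \<Longrightarrow> s < r \<Longrightarrow> (\<lambda>n. a n * (complex_of_real (-s))^n) sums 0"
  shows "a n = 0"
proof (rule ccontr)
  assume an: "a n \<noteq> 0"
  define x0 where "x0 = complex_of_real (-(r/2))"
  have s0: "summable (\<lambda>n. a n * x0^n)"
    using sm[of "r/2"] r unfolding x0_def by (auto simp: sums_iff)
  have nx0: "norm x0 = r/2" using r by (simp add: x0_def)
  define f where "f x = x * suminf (\<lambda>n. a n * x^n)" for x
  define b where "b n = (case n of 0 \<Rightarrow> 0 | Suc k \<Rightarrow> a k)" for n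
  have smb: "(\<lambda>n. b n * x^n) sums f x" if "norm x < r/2" for x
  proof -
    have "summable (\<lambda>n. a n * x^n)"
      using powser_inside[OF s0] that nx0 by simp
    then have "(\<lambda>n. a n * x^n * x) sums (suminf (\<lambda>n. a n * x^n) * x)"
      by (intro sums_mult2 summable_sums)
    then have "(\<lambda>n. b (Suc n) * x^(Suc n)) sums (f x)"
      by (simp add: b_def f_def algebra_simps)
    then have "(\<lambda>n. b n * x^n) sums (f x + b 0 * x^0)"
      by (subst sums_Suc_iff[symmetric]) simp
    then show ?thesis by (simp add: b_def)
  qed
  have f0: "f 0 = 0" by (simp add: f_def)
  have bn: "b (Suc n) \<noteq> 0" using an by (simp add: b_def)
  obtain s where s: "0 < s" and nz: "\<And>z. z \<in> cball 0 s - {0} \<Longrightarrow> f z \<noteq> 0"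
    using powser_0_nonzero[of "r/2" 0 b f "Suc n"] r smb f0 bn by auto
  define e where "e = min s (r/4)"
  have e: "0 < e" "e \<le> s" "e < r" using s r by (auto simp: e_def)
  have "suminf (\<lambda>n. a n * (complex_of_real (-e))^n) = 0"
    using sm[of e] e by (simp add: sums_iff)
  then have "f (complex_of_real (-e)) = 0" by (simp add: f_def)
  moreover have "complex_of_real (-e) \<in> cball 0 s - {0}" using e by auto
  ultimately show False using nz by blast
qed

lemma poly_zero_nonneg:
  assumes "\<And>t. t \<ge> 0 \<Longrightarrow> eval_coeff p t = 0"
  shows "p = 0"
proof (rule ccontr)
  assume "p \<noteq> 0"
  then have q: "map_poly (of_rat::rat\<Rightarrow>complex) p \<noteq> 0"
    by (subst map_poly_eq_0_iff) auto
  have "complex_of_real ` {0..} \<subseteq> {x. poly (map_poly of_rat p) x = 0}"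
    using assms by (auto simp: eval_coeff_def)
  moreover have "infinite (complex_of_real ` {0::real..})"
    by (subst finite_image_iff) (auto simp: inj_on_def infinite_Ici)
  ultimately show False using poly_roots_finite[OF q] finite_subset by blast
qed

definition regionP :: "rat poly fls \<Rightarrow> real \<Rightarrow> (complex \<Rightarrow> complex) \<Rightarrow> bool" where
  "regionP F t g \<longleftrightarrow> (\<exists>r>0. \<forall>z. 0 < cmod z \<and> cmod z < r \<and> Re z < 0 \<longrightarrow> fls_converges_to F t z (g z))"

lemma coeffs_eq_t:
  assumes "regionP F t g" "regionP G t g"
  shows "eval_coeff (fls_nth F n) t = eval_coeff (fls_nth G n) t"
proof -
  obtain r1 where r1: "r1 > 0" "\<And>z. 0 < cmod z \<Longrightarrow> cmod z < r1 \<Longrightarrow> Re z < 0 \<Longrightarrow> fls_converges_to F t z (g z)"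
    using assms(1) unfolding regionP_def by blast
  obtain r2 where r2: "r2 > 0" "\<And>z. 0 < cmod z \<Longrightarrow> cmod z < r2 \<Longrightarrow> Re z < 0 \<Longrightarrow> fls_converges_to G t z (g z)"
    using assms(2) unfolding regionP_def by blast
  define r where "r = min r1 r2"
  define D where "D = min (fls_subdegree F) (fls_subdegree G)"
  define a where "a k = eval_coeff (fls_nth F (int k + D)) t - eval_coeff (fls_nth G (int k + D)) t" for k
  have a0: "a k = 0" for k
  proof (rule powser_zero_neg[of r])
    show "r > 0" using r1 r2 by (simp add: r_def)
  next
    fix s :: real assume s: "0 < s" "s < r"
    define z where "z = complex_of_real (-s)"
    have zc: "0 < cmod z" "Re z < 0" "cmod z < r1" "cmod z < r2"
      using s by (auto simp: z_def r_def)
    have "(\<lambda>n. eval_coeff (fls_nth F (int n + D)) t * z powi (int n + D)) sums g z"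
      using r1(2)[OF zc(1,3,2)] conv_shift[of D F t z "g z"] by (simp add: D_def)
    moreover have "(\<lambda>n. eval_coeff (fls_nth G (int n + D)) t * z powi (int n + D)) sums g z"
      using r2(2)[OF zc(1,4,2)] conv_shift[of D G t z "g z"] by (simp add: D_def)
    ultimately have "(\<lambda>n. a n * z powi (int n + D)) sums 0"
      using sums_diff by (fastforce simp: a_def algebra_simps)
    then have "(\<lambda>n. a n * z powi (int n + D) * z powi (-D)) sums (0 * z powi (-D))"
      by (rule sums_mult2)
    moreover have eqn: "a n * z powi (int n + D) * z powi (-D) = a n * z ^ n" for n
    proof -
      have "z \<noteq> 0" using zc by auto
      then have "z powi (int n + D) * z powi (-D) = z powi (int n + D + (-D))"
        by (intro power_int_add[symmetric]) simp
      also have "\<dots> = z ^ n" by simp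
      finally show ?thesis by (simp add: mult.assoc)
    qed
    ultimately have "(\<lambda>n. a n * z^n) sums 0" by (simp only: eqn) simp
    then show "(\<lambda>n. a n * (complex_of_real (-s))^n) sums 0" by (simp add: z_def)
  qed
  show ?thesis
  proof (cases "n \<ge> D")
    case True
    then have "n = int (nat (n - D)) + D" by simp
    then show ?thesis using a0[of "nat (n - D)"] by (simp add: a_def)
  next
    case False
    then have "fls_nth F n = 0" "fls_nth G n = 0"
      by (auto simp: D_def fls_eq0_below_subdegree)
    then show ?thesis by simp
  qed
qed

lemma fls_unique:
  assumes "\<forall>t\<ge>0. regionP F t (g t)" "\<forall>t\<ge>0. regionP G t (g t)"
  shows "F = G"
proof (rule fls_eqI)
  fix n
  have "fls_nth F n - fls_nth G n = 0"
  proof (rule poly_zero_nonneg)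
    fix t :: real assume t: "t \<ge> 0"
    show "eval_coeff (fls_nth F n - fls_nth G n) t = 0"
      using coeffs_eq_t[OF assms(1)[rule_format, OF t] assms(2)[rule_format, OF t]]
      by (simp add: ev_diff)
  qed
  then show "fls_nth F n = fls_nth G n" by simp
qed

definition Sset :: "nat list \<Rightarrow> xmon \<Rightarrow> nat list set" where
  "Sset a m = {i \<in> tuples (length a). xmono i a = m}"

lemma S_finite:
  assumes "a \<noteq> []" "last a > 0"
  shows "finite (Sset a m)"
proof -
  have sub: "Sset a m \<subseteq> {xs. set xs \<subseteq> (\<Union>y\<in>Poly_Mapping.keys m. {..y}) \<and> length xs = length a}"
  proof
    fix i assume "i \<in> Sset a m"
    then have len: "length i = length a" and so: "sorted_wrt (<) i" and xm: "xmono i a = m"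
      by (auto simp: Sset_def tuples_def)
    define l where "l = length a - 1"
    have l: "l < length a" using assms by (simp add: l_def)
    have al: "a ! l > 0" using assms by (simp add: l_def last_conv_nth)
    have "Poly_Mapping.lookup m (i ! l) = (\<Sum>j<length i. Poly_Mapping.lookup (Poly_Mapping.single (i ! j) (a ! j)) (i ! l))"
      using xm[symmetric] unfolding xmono_def by (rule ssubst) (rule Poly_Mapping.lookup_sum)
    also have "\<dots> \<ge> Poly_Mapping.lookup (Poly_Mapping.single (i ! l) (a ! l)) (i ! l)"
      by (rule member_le_sum) (use l len in auto)
    finally have "Poly_Mapping.lookup m (i ! l) > 0" using al by (simp add: lookup_single)
    then have key: "i ! l \<in> Poly_Mapping.keys m" by (simp add: Poly_Mapping.in_keys_iff)
    have "x \<le> i ! l" if "x \<in> set i" for x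
    proof -
      obtain j where j: "j < length i" "x = i ! j" using \<open>x \<in> set i\<close> by (auto simp: in_set_conv_nth)
      have "j \<le> l" using j len by (simp add: l_def)
      then show ?thesis
        using j so l len by (cases "j = l") (auto simp: sorted_wrt_iff_nth_less intro: less_imp_le)
    qed
    then show "i \<in> {xs. set xs \<subseteq> (\<Union>y\<in>Poly_Mapping.keys m. {..y}) \<and> length xs = length a}"
      using key len by auto
  qed
  show ?thesis
    by (rule finite_subset[OF sub], rule finite_lists_length_eq) auto
qed

lemma of_rat_fact': "of_rat (fact n) = (fact n :: 'a::field_char_0)"
  by (metis of_nat_fact of_rat_of_nat_eq)

definition cc :: "nat list \<Rightarrow> nat list \<Rightarrow> nat" where
  "cc b i = (\<Sum>j<length i. i ! j * b ! j)"
definition BB :: "nat list \<Rightarrow> nat list \<Rightarrow> nat" where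
  "BB b i = (\<Sum>j<length i. b ! j)"
definition lin :: "nat list \<Rightarrow> nat list \<Rightarrow> rat poly" where
  "lin b i = [: of_nat (cc b i), of_nat (BB b i) :]"
definition Eser :: "nat list \<Rightarrow> nat list \<Rightarrow> xmon \<Rightarrow> rat poly fps" where
  "Eser a b m = Abs_fps (\<lambda>n. \<Sum>i\<in>Sset a m. smult (inverse (fact n)) (lin b i ^ n))"

lemma exponent:
  "(\<Sum>j<length i. (of_nat (i!j) + complex_of_real t) * of_nat (b!j) * z) =
     (of_nat (cc b i) + of_nat (BB b i) * complex_of_real t) * z"
  by (simp add: cc_def BB_def sum_distrib_left sum_distrib_right sum.distrib algebra_simps)

lemma eval_lin: "eval_coeff (lin b i) t = of_nat (cc b i) + of_nat (BB b i) * complex_of_real t"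
  by (simp add: lin_def ev_lin)

lemma exp_term:
  fixes w z :: complex
  shows
  "(\<lambda>n. of_rat (inverse (fact n)) * w ^ n * z ^ n) sums exp (w * z)"
proof -
  have fa: "of_rat (inverse (fact n)) = (of_real (inverse (fact n)) :: complex)" for n
    by (metis of_real_fact of_real_inverse of_rat_inverse of_nat_fact of_rat_of_nat_eq)
  have "(w * z) ^ n /\<^sub>R fact n = of_rat (inverse (fact n)) * w ^ n * z ^ n" for n
    unfolding fa by (simp add: scaleR_conv_of_real power_mult_distrib mult_ac)
  then show ?thesis using exp_converges[of "w * z"] by simp
qed

lemma E_conv:
  assumes "finite (Sset a m)"
  shows "fls_converges_to (fps_to_fls (Eser a b m)) t z (phi_fun a b m t z)"
proof -
  have pf: "phi_fun a b m t z = (\<Sum>i\<in>Sset a m. exp ((of_nat (cc b i) + of_nat (BB b i) * complex_of_real t) * z))"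
  proof -
    have "phi_fun a b m t z = (\<Sum>i\<in>Sset a m. exp (\<Sum>j<length i. (of_nat (i ! j) + complex_of_real t) * of_nat (b ! j) * z))"
      using assms by (simp add: phi_fun_def Sset_def)
    then show ?thesis by (simp only: exponent)
  qed
  have "(\<lambda>n. \<Sum>i\<in>Sset a m. of_rat (inverse (fact n)) * (of_nat (cc b i) + of_nat (BB b i) * complex_of_real t) ^ n * z ^ n)
        sums (\<Sum>i\<in>Sset a m. exp ((of_nat (cc b i) + of_nat (BB b i) * complex_of_real t) * z))"
    by (rule sums_sum) (rule exp_term)
  moreover have "eval_coeff (fls_nth (fps_to_fls (Eser a b m)) (int n + 0)) t * z powi (int n + 0) =
     (\<Sum>i\<in>Sset a m. of_rat (inverse (fact n)) * (of_nat (cc b i) + of_nat (BB b i) * complex_of_real t) ^ n * z ^ n)" for n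
    by (simp add: Eser_def ev_sum ev_smult ev_power eval_lin sum_distrib_right)
  ultimately show ?thesis
    by (subst conv_shift[of 0]) (simp_all add: fls_subdegree_fls_to_fps pf)
qed

lemma phi_eq:
  assumes "a \<noteq> []" "last a > 0"
  shows "phi a b m = fps_to_fls (Eser a b m)"
proof -
  have P: "\<forall>t\<ge>0. regionP (fps_to_fls (Eser a b m)) t (phi_fun a b m t)"
    using E_conv[OF S_finite[OF assms]] unfolding regionP_def by (auto intro: exI[of _ 1])
  show ?thesis
    unfolding phi_def
  proof (rule the_equality)
    show "\<forall>t\<ge>0. \<exists>r>0. \<forall>z. 0 < cmod z \<and> cmod z < r \<and> Re z < 0 \<longrightarrow>
                  fls_converges_to (fps_to_fls (Eser a b m)) t z (phi_fun a b m t z)"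
      using P unfolding regionP_def by blast
  next
    fix F assume "\<forall>t\<ge>0. \<exists>r>0. \<forall>z. 0 < cmod z \<and> cmod z < r \<and> Re z < 0 \<longrightarrow>
                  fls_converges_to F t z (phi_fun a b m t z)"
    then have "\<forall>t\<ge>0. regionP F t (phi_fun a b m t)" unfolding regionP_def by blast
    then show "F = fps_to_fls (Eser a b m)" using fls_unique P by blast
  qed
qed

lemma phi_minus_zero:
  assumes "a \<noteq> []" "last a > 0"
  shows "phi_minus a b = (\<lambda>_. 0)"
  using assms
proof (induction "length a" arbitrary: a b rule: less_induct)
  case less
  have "lmult (phi (take i a) (take i b)) (phi_minus (drop i a) (drop i b)) m = 0"
    if "i \<in> {1..<length a}" for i m
  proof -
    have "drop i a \<noteq> []" "last (drop i a) > 0" "length (drop i a) < length a"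
      using that less.prems by (auto simp: last_drop)
    then have "phi_minus (drop i a) (drop i b) = (\<lambda>_. 0)" using less.hyps by blast
    then show ?thesis by (simp add: lmult_def case_prod_beta)
  qed
  then show ?case
    by (subst phi_minus.simps) (simp add: phi_eq[OF less.prems] polar_def)
qed

theorem corollary4p5:
  fixes \<alpha> \<beta> :: "nat list"
  assumes "length \<alpha> \<ge> 1" and "last \<alpha> > 0"
    and "length \<beta> = length \<alpha>" and "\<forall>b\<in>set \<beta>. b > 0"
  shows "Zren \<alpha> \<beta> = Mqsym \<alpha>"
proof
  fix m
  have ne: "\<alpha> \<noteq> []" using assms(1) by auto
  have "lmult (phi (take i \<alpha>) (take i \<beta>)) (phi_minus (drop i \<alpha>) (drop i \<beta>)) m = 0"
    if "i \<in> {1..<length \<alpha>}" for i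
  proof -
    have "drop i \<alpha> \<noteq> []" "last (drop i \<alpha>) > 0"
      using that assms by (auto simp: last_drop)
    then show ?thesis by (simp add: phi_minus_zero lmult_def case_prod_beta)
  qed
  then have "phi_plus \<alpha> \<beta> m = fps_to_fls (Eser \<alpha> \<beta> m)"
    by (simp add: phi_plus_def phi_eq[OF ne assms(2)] regular_def)
  then show "Zren \<alpha> \<beta> m = Mqsym \<alpha> m"
    by (simp add: Zren_def Eser_def Mqsym_def Sset_def)
qed

end
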